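(* Let $\phi:\mathbb{R}^N\to\mathbb{R}$ be a bounded Borel function with $\phi\in C^{1,1}(x)$ and $p_x\neq0$. Then $$\mathcal{L}_s[\phi](x)=\int_0^\infty L_\phi\Big(x,t\frac{p_x}{|p_x|},t\frac{p_x}{|p_x|}\Big)\,\mathrm{d}\mu_s(t).$$
   Context: Fix $N\ge1$ and $s\in(\frac12,1)$. Let $C_s=\frac{4^s s\,\Gamma(\frac12+s)}{\pi^{1/2}\Gamma(1-s)}$. Let $\mu_s$ be the Borel measure on $(0,\infty)$ with $\mathrm{d}\mu_s(t)=C_s t^{-1-2s}\,\mathrm{d}t$. For $\phi:\mathbb{R}^N\to\mathbb{R}$ and $x,y,\tilde y\in\mathbb{R}^N$ let $L_\phi(x,y,\tilde y)=\phi(x+y)+\phi(x-\tilde y)-2\phi(x)$. Define $$\mathcal{L}_s[\phi](x)=\sup_{|y|=1}\inf_{|\tilde y|=1}\int_0^\infty L_\phi(x,ty,t\tilde y)\,\mathrm{d}\mu_s(t),$$ where $\int_0^\infty$ means $\lim_{\delta\to0^+}\int_\delta^\infty$ (a value in $[-\infty,\infty]$). We say $\phi\in C^{1,1}(x)$ if there exist $p_x\in\mathbb{R}^N$ and $C_x,\eta_x>0$ with $|\phi(x+y)-\phi(x)-\langle p_x,y\rangle|\le C_x|y|^2$ for all $|y|<\eta_x$. *)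

theory Defs
  imports "HOL-Analysis.Analysis"
begin

definition C_const :: "real \<Rightarrow> real" where
  "C_const s = (4 powr s * s * Gamma (1/2 + s)) / (sqrt pi * Gamma (1 - s))"

text \<open>Density of mu_s with respect to Lebesgue measure on (0,inf).\<close>
definition mu_density :: "real \<Rightarrow> real \<Rightarrow> real" where
  "mu_density s t = C_const s * t powr (- 1 - 2 * s)"

definition Lphi :: "('a::real_normed_vector \<Rightarrow> real) \<Rightarrow> 'a \<Rightarrow> 'a \<Rightarrow> 'a \<Rightarrow> real" where
  "Lphi \<phi> x y z = \<phi> (x + y) + \<phi> (x - z) - 2 * \<phi> x"

definition pv_integral :: "real \<Rightarrow> (real \<Rightarrow> real) \<Rightarrow> ereal" where
  "pv_integral s f = Lim (at_right 0)
      (\<lambda>\<delta>. ereal (LINT t:{\<delta><..}|lborel. f t * mu_density s t))"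

definition frac_op :: "real \<Rightarrow> ('a::euclidean_space \<Rightarrow> real) \<Rightarrow> 'a \<Rightarrow> ereal" where
  "frac_op s \<phi> x = (SUP y\<in>sphere 0 1. INF z\<in>sphere 0 1.
      pv_integral s (\<lambda>t. Lphi \<phi> x (t *\<^sub>R y) (t *\<^sub>R z)))"

definition C11_at :: "('a::euclidean_space \<Rightarrow> real) \<Rightarrow> 'a \<Rightarrow> 'a \<Rightarrow> bool" where
  "C11_at \<phi> x p \<longleftrightarrow> (\<exists>C \<eta>. C > 0 \<and> \<eta> > 0 \<and>
      (\<forall>y. norm y < \<eta> \<longrightarrow> \<bar>\<phi> (x + y) - \<phi> x - inner p y\<bar> \<le> C * (norm y)\<^sup>2))"

end

theory Submission
  imports Defs
begin

lemma powr_tail_lborel: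
  fixes a e :: real
  assumes e: "e < -1" and a: "a > 0"
  shows "set_integrable lborel {a<..} (\<lambda>x. x powr e)"
    and "(LINT x:{a<..}|lborel. x powr e) = -(a powr (e+1)) / (e+1)"
proof -
  have h0: "((\<lambda>x. x powr e) has_integral -(a powr (e+1)) / (e+1)) {a..}"
    by (rule has_integral_powr_to_inf[OF e a])
  have h: "((\<lambda>x. x powr e) has_integral -(a powr (e+1)) / (e+1)) {a<..}"
  proof (subst has_integral_spike_set_eq)
    show "negligible {x \<in> {a<..} - {a..}. x powr e \<noteq> 0}"
      by (rule negligible_subset[of "{a}"]) auto
    show "negligible {x \<in> {a..} - {a<..}. x powr e \<noteq> 0}"
      by (rule negligible_subset[of "{a}"]) auto
  qed (rule h0)
  have "(\<lambda>x. x powr e) absolutely_integrable_on {a<..}"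
    using h by (intro nonnegative_absolutely_integrable_1) (auto simp: integrable_on_def)
  then show si: "set_integrable lborel {a<..} (\<lambda>x. x powr e)"
    unfolding set_integrable_def
    by (subst (asm) integrable_completion) auto
  show "(LINT x:{a<..}|lborel. x powr e) = -(a powr (e+1)) / (e+1)"
    using set_borel_integral_eq_integral(2)[OF si] h by (simp add: integral_unique)
qed

lemma C_const_pos: "0 < s \<Longrightarrow> s < 1 \<Longrightarrow> C_const s > 0"
  unfolding C_const_def by (intro divide_pos_pos mult_pos_pos Gamma_real_pos) auto

lemma core_infty:
  fixes f :: "real \<Rightarrow> real"
  assumes s: "1/2 < s" "s < 1" and fm: "f \<in> borel_measurable borel"
    and M: "\<And>t. \<bar>f t\<bar> \<le> M"
    and \<alpha>: "\<alpha> > 0" and \<eta>: "\<eta> > 0" and low: "\<And>t. 0 < t \<Longrightarrow> t \<le> \<eta> \<Longrightarrow> \<alpha> * t \<le> f t"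
  shows "((\<lambda>\<delta>. ereal (LINT t:{\<delta><..}|lborel. f t * mu_density s t)) \<longlongrightarrow> \<infinity>) (at_right 0)"
proof -
  define c where "c = C_const s"
  have c: "c > 0" unfolding c_def using s by (intro C_const_pos) auto
  have M0: "M \<ge> 0" using M[of 0] by linarith
  have e1: "- 1 - 2 * s < - 1" "- 2 * s < - 1" using s by auto
  have dens: "mu_density s t = c * t powr (- 1 - 2 * s)" for t unfolding mu_density_def c_def by simp
  have integ: "set_integrable lborel {\<delta><..} (\<lambda>t. f t * mu_density s t)" if "\<delta> > 0" for \<delta>
  proof (rule set_integrable_bound[where f="\<lambda>t. M * c * t powr (- 1 - 2 * s)"])
    show "set_integrable lborel {\<delta><..} (\<lambda>t. M * c * t powr (- 1 - 2 * s))"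
      using powr_tail_lborel(1)[OF e1(1) that] by (cases "M * c = 0") auto
    show "set_borel_measurable lborel {\<delta><..} (\<lambda>t. f t * mu_density s t)"
      unfolding set_borel_measurable_def dens using fm by measurable
    show "AE x in lborel. x \<in> {\<delta><..} \<longrightarrow> norm (f x * mu_density s x) \<le> norm (M * c * x powr (- 1 - 2 * s))"
      using M M0 c by (auto simp: dens abs_mult intro!: mult_right_mono)
  qed
  define K where "K = c * \<alpha> * (-(\<eta> powr (- 2 * s+1)) / (- 2 * s+1)) + M * c * (-(\<eta> powr (- 1 - 2 * s+1)) / (- 1 - 2 * s+1))"
  define B where "B = (\<lambda>\<delta>. c * \<alpha> * (-(\<delta> powr (- 2 * s+1)) / (- 2 * s+1)) - K)"
  have Bval: "B \<delta> \<le> (LINT t:{\<delta><..}|lborel. f t * mu_density s t)" if "0 < \<delta>" "\<delta> < \<eta>" for \<delta>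
  proof -
    define g2 where "g2 = (\<lambda>t::real. c * \<alpha> * t powr (- 2 * s) + M * c * t powr (- 1 - 2 * s))"
    have si1: "set_integrable lborel {\<delta><..} (\<lambda>t. c * \<alpha> * t powr (- 2 * s))"
      using powr_tail_lborel(1)[OF e1(2) that(1)] c \<alpha> by auto
    have si2': "set_integrable lborel {\<eta><..} g2"
      unfolding g2_def using powr_tail_lborel(1)[OF e1(1) \<eta>] powr_tail_lborel(1)[OF e1(2) \<eta>] c \<alpha>
      by (intro set_integral_add) (auto simp: mult.assoc)
    have I2': "(LINT t:{\<eta><..}|lborel. g2 t) = K"
      unfolding g2_def K_def
      using powr_tail_lborel[OF e1(1) \<eta>] powr_tail_lborel[OF e1(2) \<eta>] c \<alpha>
      by (subst set_integral_add) (auto simp: mult.assoc)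
    have eqind: "(\<lambda>x. indicator {\<delta><..} x *\<^sub>R (if \<eta> < x then g2 x else 0)) = (\<lambda>x. indicator {\<eta><..} x *\<^sub>R g2 x)"
      using that by (auto simp: indicator_def fun_eq_iff)
    have si2: "set_integrable lborel {\<delta><..} (\<lambda>t. if \<eta> < t then g2 t else 0)"
      using si2' unfolding set_integrable_def eqind .
    have I2: "(LINT t:{\<delta><..}|lborel. (if \<eta> < t then g2 t else 0)) = K"
      using I2' unfolding set_lebesgue_integral_def eqind .
    have I1: "(LINT t:{\<delta><..}|lborel. c * \<alpha> * t powr (- 2 * s)) = c * \<alpha> * (-(\<delta> powr (- 2 * s+1)) / (- 2 * s+1))"
      using powr_tail_lborel(2)[OF e1(2) that(1)] by (simp add: mult.assoc)
    have "B \<delta> = (LINT t:{\<delta><..}|lborel. c * \<alpha> * t powr (- 2 * s) - (if \<eta> < t then g2 t else 0))"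
      using I1 I2 si1 si2 unfolding B_def by (subst set_integral_diff(2)) auto
    also have "\<dots> \<le> (LINT t:{\<delta><..}|lborel. f t * mu_density s t)"
    proof (rule set_integral_mono)
      show "set_integrable lborel {\<delta><..} (\<lambda>t. c * \<alpha> * t powr (- 2 * s) - (if \<eta> < t then g2 t else 0))"
        using si1 si2 by auto
      show "set_integrable lborel {\<delta><..} (\<lambda>t. f t * mu_density s t)" using integ that by auto
      fix t assume t: "t \<in> {\<delta><..}"
      then have tp: "t > 0" using that by auto
      show "c * \<alpha> * t powr (- 2 * s) - (if \<eta> < t then g2 t else 0) \<le> f t * mu_density s t"
      proof (cases "\<eta> < t")
        case True
        have "- M \<le> f t" using M[of t] by linarith
        then have "- M * (c * t powr (- 1 - 2 * s)) \<le> f t * (c * t powr (- 1 - 2 * s))"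
          using c by (intro mult_right_mono) auto
        then show ?thesis using True by (simp add: g2_def dens algebra_simps)
      next
        case False
        have pw: "t * t powr (- 1 - 2 * s) = t powr (- 2 * s)"
          using tp by (simp add: powr_add[symmetric] powr_mult_base)
        have "\<alpha> * t * (c * t powr (- 1 - 2 * s)) \<le> f t * (c * t powr (- 1 - 2 * s))"
          using low[of t] tp False c by (intro mult_right_mono) auto
        then show ?thesis using False pw by (simp add: dens algebra_simps)
      qed
    qed
    finally show ?thesis .
  qed
  have P: "filterlim (\<lambda>\<delta>::real. inverse (\<delta> powr (2 * s-1))) at_top (at_right 0)"
    using s by (intro filterlim_inverse_at_top tendsto_zero_powrI tendsto_ident_at tendsto_const)
      (auto simp: eventually_at_right_field intro!: exI[of _ 1])
  have k: "c * \<alpha> / (2 * s-1) > 0" using c \<alpha> s by auto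
  have P2: "filterlim (\<lambda>\<delta>::real. -K + (c * \<alpha> / (2 * s-1)) * inverse (\<delta> powr (2 * s-1))) at_top (at_right 0)"
    by (intro filterlim_tendsto_add_at_top[OF tendsto_const] filterlim_tendsto_pos_mult_at_top[OF tendsto_const k P])
  have Beq: "eventually (\<lambda>\<delta>. -K + (c * \<alpha> / (2 * s-1)) * inverse (\<delta> powr (2 * s-1)) = B \<delta>) (at_right 0)"
    unfolding eventually_at_right_field
  proof (intro exI[of _ 1] conjI allI impI)
    fix \<delta> :: real assume "0 < \<delta>"
    have "\<delta> powr (- 2 * s + 1) = inverse (\<delta> powr (2 * s-1))"
      by (simp add: powr_minus[symmetric])
    moreover have "- 2 * s + 1 = -(2 * s-1)" by simp
    ultimately have "-(\<delta> powr (- 2 * s + 1)) / (- 2 * s + 1) = inverse (\<delta> powr (2 * s-1)) / (2 * s-1)"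
      by (metis minus_divide_divide)
    then show "-K + (c * \<alpha> / (2 * s-1)) * inverse (\<delta> powr (2 * s-1)) = B \<delta>"
      unfolding B_def by simp
  qed simp
  have Blim: "filterlim B at_top (at_right 0)"
    using filterlim_cong[OF refl refl Beq] P2 by simp
  have ev: "eventually (\<lambda>\<delta>. B \<delta> \<le> (LINT t:{\<delta><..}|lborel. f t * mu_density s t)) (at_right 0)"
    unfolding eventually_at_right_field using \<eta> Bval by (intro exI[of _ \<eta>]) auto
  show ?thesis
    unfolding tendsto_PInfty_eq_at_top
    by (rule filterlim_at_top_mono[OF Blim ev])
qed

lemma core_minfty:
  fixes f :: "real \<Rightarrow> real"
  assumes s: "1/2 < s" "s < 1" and fm: "f \<in> borel_measurable borel"
    and M: "\<And>t. \<bar>f t\<bar> \<le> M"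
    and \<alpha>: "\<alpha> > 0" and \<eta>: "\<eta> > 0" and low: "\<And>t. 0 < t \<Longrightarrow> t \<le> \<eta> \<Longrightarrow> f t \<le> - \<alpha> * t"
  shows "((\<lambda>\<delta>. ereal (LINT t:{\<delta><..}|lborel. f t * mu_density s t)) \<longlongrightarrow> -\<infinity>) (at_right 0)"
proof -
  have "((\<lambda>\<delta>. ereal (LINT t:{\<delta><..}|lborel. (- f t) * mu_density s t)) \<longlongrightarrow> \<infinity>) (at_right 0)"
  proof (rule core_infty[OF s _ _ \<alpha> \<eta>, of _ M])
    show "(\<lambda>t. - f t) \<in> borel_measurable borel" using fm by simp
    show "\<bar>- f t\<bar> \<le> M" for t using M[of t] by simp
    show "\<alpha> * t \<le> - f t" if "0 < t" "t \<le> \<eta>" for t using low[OF that] by linarith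
  qed
  then have "((\<lambda>\<delta>. - ereal (LINT t:{\<delta><..}|lborel. (- f t) * mu_density s t)) \<longlongrightarrow> - \<infinity>) (at_right 0)"
    by (intro tendsto_uminus_ereal) 
  moreover have "- ereal (LINT t:{\<delta><..}|lborel. (- f t) * mu_density s t) = ereal (LINT t:{\<delta><..}|lborel. f t * mu_density s t)" for \<delta>
    unfolding set_lebesgue_integral_def by (simp add: integral_minus[symmetric] del: integral_minus)
  ultimately show ?thesis by simp
qed

theorem proposition2p2:
  fixes \<phi> :: "'a::euclidean_space \<Rightarrow> real" and x p :: 'a and s :: real
  assumes "1/2 < s" and "s < 1"
    and "\<phi> \<in> borel_measurable borel"
    and "bounded (range \<phi>)"
    and "C11_at \<phi> x p"
    and "p \<noteq> 0"
  shows "frac_op s \<phi> x =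
    pv_integral s (\<lambda>t. Lphi \<phi> x (t *\<^sub>R (p /\<^sub>R norm p)) (t *\<^sub>R (p /\<^sub>R norm p)))"
proof -
  note s = assms(1,2)
  have [measurable]: "\<phi> \<in> borel_measurable borel" by (rule assms(3))
  obtain C \<eta> where C: "C > 0" and \<eta>: "\<eta> > 0"
    and H: "\<And>y. norm y < \<eta> \<Longrightarrow> \<bar>\<phi> (x + y) - \<phi> x - inner p y\<bar> \<le> C * (norm y)\<^sup>2"
    using assms(5) unfolding C11_at_def by blast
  obtain M where M: "\<And>u. \<bar>\<phi> u\<bar> \<le> M"
    using assms(4) unfolding bounded_iff by auto
  define L where "L = (\<lambda>y z t. Lphi \<phi> x (t *\<^sub>R y) (t *\<^sub>R z))"
  have Lm: "L y z \<in> borel_measurable borel" for y z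
    unfolding L_def Lphi_def by measurable
  have Lb: "\<bar>L y z t\<bar> \<le> 4 * M" for y z t
    using M[of "x + t *\<^sub>R y"] M[of "x - t *\<^sub>R z"] M[of x] unfolding L_def Lphi_def by linarith
  have Lapprox: "\<bar>L y z t - t * inner p (y - z)\<bar> \<le> 2 * C * t\<^sup>2"
    if "norm y = 1" "norm z = 1" "0 < t" "t < \<eta>" for y z t
  proof -
    have n1: "norm (t *\<^sub>R y) = t" "norm (- (t *\<^sub>R z)) = t" using that by auto
    have a1: "\<bar>\<phi> (x + t *\<^sub>R y) - \<phi> x - t * inner p y\<bar> \<le> C * t\<^sup>2"
      using H[of "t *\<^sub>R y"] n1 that by simp
    have a2: "\<bar>\<phi> (x - t *\<^sub>R z) - \<phi> x + t * inner p z\<bar> \<le> C * t\<^sup>2"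
      using H[of "- (t *\<^sub>R z)"] n1 that by simp
    show ?thesis using a1 a2 unfolding L_def Lphi_def by (simp add: inner_diff_right algebra_simps) 
  qed
  define F where "F = (\<lambda>y z. pv_integral s (L y z))"
  have F_PInf: "F y z = \<infinity>" if "norm y = 1" "norm z = 1" "inner p (y - z) > 0" for y z
  proof -
    define a where "a = inner p (y - z)"
    have a: "a > 0" using that a_def by auto
    define \<eta>' where "\<eta>' = min (\<eta>/2) (a / (4 * C))"
    have \<eta>': "\<eta>' > 0" using a C \<eta> unfolding \<eta>'_def by auto
    have "((\<lambda>\<delta>. ereal (LINT t:{\<delta><..}|lborel. L y z t * mu_density s t)) \<longlongrightarrow> \<infinity>) (at_right 0)"
    proof (rule core_infty[OF s Lm Lb _ \<eta>'])
      show "0 < a / 2" using a by simp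
      fix t :: real assume t: "0 < t" "t \<le> \<eta>'"
      then have tl: "t < \<eta>" "t \<le> a / (4 * C)" unfolding \<eta>'_def using \<eta> by auto
      have "2 * C * t \<le> a / 2" using tl C by (simp add: field_simps)
      then have "2 * C * t * t \<le> a / 2 * t" using t by (intro mult_right_mono) auto
      moreover have "\<bar>L y z t - t * a\<bar> \<le> 2 * C * t\<^sup>2" using Lapprox[OF that(1,2) t(1) tl(1)] a_def by simp
      ultimately show "a / 2 * t \<le> L y z t" by (simp add: power2_eq_square algebra_simps abs_le_iff)
    qed
    then show ?thesis unfolding F_def pv_integral_def by (intro tendsto_Lim) auto
  qed
  have F_MInf: "F y z = -\<infinity>" if "norm y = 1" "norm z = 1" "inner p (y - z) < 0" for y z
  proof -
    define a where "a = - inner p (y - z)"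
    have a: "a > 0" using that a_def by auto
    define \<eta>' where "\<eta>' = min (\<eta>/2) (a / (4 * C))"
    have \<eta>': "\<eta>' > 0" using a C \<eta> unfolding \<eta>'_def by auto
    have "((\<lambda>\<delta>. ereal (LINT t:{\<delta><..}|lborel. L y z t * mu_density s t)) \<longlongrightarrow> -\<infinity>) (at_right 0)"
    proof (rule core_minfty[OF s Lm Lb _ \<eta>'])
      show "0 < a / 2" using a by simp
      fix t :: real assume t: "0 < t" "t \<le> \<eta>'"
      then have tl: "t < \<eta>" "t \<le> a / (4 * C)" unfolding \<eta>'_def using \<eta> by auto
      have "2 * C * t \<le> a / 2" using tl C by (simp add: field_simps)
      then have "2 * C * t * t \<le> a / 2 * t" using t by (intro mult_right_mono) auto
      moreover have "\<bar>L y z t + t * a\<bar> \<le> 2 * C * t\<^sup>2" using Lapprox[OF that(1,2) t(1) tl(1)] a_def by simp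
      ultimately show "L y z t \<le> - (a / 2) * t" by (simp add: power2_eq_square algebra_simps abs_le_iff)
    qed
    then show ?thesis unfolding F_def pv_integral_def by (intro tendsto_Lim) auto
  qed
  define e where "e = p /\<^sub>R norm p"
  have ne: "norm e = 1" using assms(6) unfolding e_def by simp
  have ie: "inner p e = norm p" using assms(6) unfolding e_def
    by (simp add: power2_norm_eq_inner[symmetric] power2_eq_square)
  have cs: "inner p y < norm p" if "norm y = 1" "y \<noteq> e" for y
  proof -
    have "inner p y \<le> norm p * norm y" by (rule norm_cauchy_schwarz)
    moreover have "inner p y \<noteq> norm p * norm y"
    proof
      assume "inner p y = norm p * norm y"
      then have "norm p *\<^sub>R y = norm y *\<^sub>R p" by (simp add: norm_cauchy_schwarz_eq)
      then have "norm p *\<^sub>R y = p" using that by simp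
      then have "inverse (norm p) *\<^sub>R (norm p *\<^sub>R y) = e" unfolding e_def by simp
      then have "y = e" using assms(6) by simp
      then show False using that by simp
    qed
    ultimately show ?thesis using that by simp
  qed
  let ?S = "sphere (0::'a) 1"
  have eS: "e \<in> ?S" using ne by simp
  have INFe: "(INF z\<in>?S. F e z) = F e e"
  proof (rule antisym)
    show "(INF z\<in>?S. F e z) \<le> F e e" using eS by (rule INF_lower)
    show "F e e \<le> (INF z\<in>?S. F e z)"
    proof (rule INF_greatest)
      fix z assume z: "z \<in> ?S"
      show "F e e \<le> F e z"
      proof (cases "z = e")
        case False
        have "inner p (e - z) > 0" using cs[of z] z False ie by (simp add: inner_diff_right)
        then show ?thesis using F_PInf[of e z] ne z by simp
      qed simp
    qed
  qed
  have INFy: "(INF z\<in>?S. F y z) = -\<infinity>" if "y \<in> ?S" "y \<noteq> e" for y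
  proof -
    have "inner p (y - e) < 0" using cs[of y] that ie by (simp add: inner_diff_right)
    then have "F y e = -\<infinity>" using F_MInf[of y e] ne that by simp
    moreover have "(INF z\<in>?S. F y z) \<le> F y e" using eS by (rule INF_lower)
    ultimately show ?thesis by simp
  qed
  have "frac_op s \<phi> x = (SUP y\<in>?S. INF z\<in>?S. F y z)"
    unfolding frac_op_def F_def L_def by simp
  also have "\<dots> = F e e"
  proof (rule antisym)
    show "(SUP y\<in>?S. INF z\<in>?S. F y z) \<le> F e e"
    proof (rule SUP_least)
      fix y assume y: "y \<in> ?S"
      show "(INF z\<in>?S. F y z) \<le> F e e"
        using INFe INFy[OF y] by (cases "y = e") auto
    qed
    show "F e e \<le> (SUP y\<in>?S. INF z\<in>?S. F y z)"
      using INFe eS by (metis SUP_upper)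
  qed
  finally show ?thesis unfolding F_def L_def e_def .
qed

end
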